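(* Let $n,k$ be integers with $1<k<n-1$ and let $\mathcal{P}_{k,n}=\{x\in[0,1]^n:\sum_{i=1}^nx_i=k\}$. There is no differentiable strong Bernoulli factory for $\mathcal{P}_{k,n}$.
   Context: A Bernoulli factory with output set $V$ (for inputs $x\in[0,1]^n$) is a (possibly infinite) rooted binary tree whose internal nodes are labeled by an index $i\in[n]$ or a known constant $c\in(0,1)$ and whose leaves are labeled by elements of $V$; on input $x$ one walks from the root, at a node labeled $i$ flipping a fresh independent coin that is $1$ with probability $x_i$, at a node labeled $c$ a fresh coin of bias $c$, following the edge labeled by the outcome, and outputs the label of the leaf reached; $\mathcal{F}(x)$ is the output and $T_{\mathcal{F}}(x)$ the depth of the leaf reached ($\infty$ if none). For a polytope $\mathcal{P}$ with vertex set $V$, a strong Bernoulli factory for $\mathcal{P}$ is such a factory with output set $V$ that terminates almost surely and satisfies $\mathbb{E}[\mathcal{F}(x)]=x$ for all $x\in\mathcal{P}$. Define $P_v(x)=\Pr[\mathcal{F}(x)=v]$ and $P_{v,T}(x)=\Pr[\mathcal{F}(x)=v\wedge T_{\mathcal{F}}(x)\le T]$; the latter is the polynomial equal to the sum, over leaves labeled $v$ at depth at most $T$, of the product of the transition probabilities along the root-to-leaf path. Let $\mathcal{H}(\mathcal{P})$ be the affine span of $\mathcal{P}$ and $\mathcal{H}_0(\mathcal{P})=\{y-y':y,y'\in\mathcal{H}(\mathcal{P})\}$. $\mathcal{F}$ is differentiable (as a factory for $\mathcal{P}$) if for each $v\in V$ and each $u\in\mathcal{H}_0(\mathcal{P})$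 with $\|u\|=1$, at every $x\in\mathcal{P}$ the directional derivative $\partial_uP_v(x)$ exists and equals $\lim_{T\to\infty}\partial_uP_{v,T}(x)$. *)

theory Defs
  imports "HOL-Analysis.Analysis"
begin

text \<open>A tree is encoded as a
labelling of all positions (finite bool lists = paths from the root; True = outcome 1).
Positions below a leaf are irrelevant (unreachable).\<close>

datatype ('i, 'v) bf_node = Coin 'i | Const real | Leaf 'v

type_synonym ('i, 'v) bf_tree = "bool list \<Rightarrow> ('i, 'v) bf_node"

definition is_leaf :: "('i, 'v) bf_node \<Rightarrow> bool" where
  "is_leaf a = (case a of Leaf _ \<Rightarrow> True | _ \<Rightarrow> False)"

definition trans_prob :: "real ^ 'n \<Rightarrow> ('n, 'v) bf_node \<Rightarrow> bool \<Rightarrow> real" where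
  "trans_prob x a b = (case a of
      Coin i \<Rightarrow> (if b then x $ i else 1 - x $ i)
    | Const c \<Rightarrow> (if b then c else 1 - c)
    | Leaf _ \<Rightarrow> 1)"

definition reach :: "('i, 'v) bf_tree \<Rightarrow> bool list \<Rightarrow> bool" where
  "reach t p = (\<forall>j<length p. \<not> is_leaf (t (take j p)))"

definition path_weight :: "('n, 'v) bf_tree \<Rightarrow> real ^ 'n \<Rightarrow> bool list \<Rightarrow> real" where
  "path_weight t x p = (\<Prod>j<length p. trans_prob x (t (take j p)) (p ! j))"

definition PvT :: "('n, 'v) bf_tree \<Rightarrow> 'v \<Rightarrow> real ^ 'n \<Rightarrow> nat \<Rightarrow> real" where
  "PvT t v x T = (\<Sum>p\<in>{p. length p \<le> T \<and> reach t p \<and> t p = Leaf v}. path_weight t x p)"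

text \<open>P_v(x) = Pr[F(x) = v] = lim_T P_{v,T}(x).\<close>
definition Pv :: "('n, 'v) bf_tree \<Rightarrow> 'v \<Rightarrow> real ^ 'n \<Rightarrow> real" where
  "Pv t v x = lim (\<lambda>T. PvT t v x T)"

text \<open>Pr[T_F(x) \<le> T].\<close>
definition term_prob :: "('n, 'v) bf_tree \<Rightarrow> real ^ 'n \<Rightarrow> nat \<Rightarrow> real" where
  "term_prob t x T = (\<Sum>p\<in>{p. length p \<le> T \<and> reach t p \<and> is_leaf (t p)}. path_weight t x p)"

definition unit_cube :: "(real ^ 'n) set" where
  "unit_cube = {x. \<forall>i. 0 \<le> x $ i \<and> x $ i \<le> 1}"

definition vertices :: "(real ^ 'n) set \<Rightarrow> (real ^ 'n) set" where
  "vertices P = {v. v extreme_point_of P}"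

definition bernoulli_factory :: "(real ^ 'n) set \<Rightarrow> ('n, real ^ 'n) bf_tree \<Rightarrow> bool" where
  "bernoulli_factory V t = (\<forall>p. case t p of
       Const c \<Rightarrow> 0 < c \<and> c < 1
     | Leaf v \<Rightarrow> v \<in> V
     | Coin _ \<Rightarrow> True)"

definition strong_factory :: "(real ^ 'n) set \<Rightarrow> ('n, real ^ 'n) bf_tree \<Rightarrow> bool" where
  "strong_factory P t = (bernoulli_factory (vertices P) t \<and>
     (\<forall>x\<in>P. (\<lambda>T. term_prob t x T) \<longlonglongrightarrow> 1) \<and>
     (\<forall>x\<in>P. (\<Sum>v\<in>vertices P. Pv t v x *\<^sub>R v) = x))"

definition H0 :: "(real ^ 'n) set \<Rightarrow> (real ^ 'n) set" where
  "H0 P = {y - y' | y y'. y \<in> affine hull P \<and> y' \<in> affine hull P}"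

text \<open>Differentiability. P_v is only meaningful on [0,1]^n, so the directional derivative
of P_v at x is taken along the line x + s u restricted to the cube.\<close>
definition differentiable_factory :: "(real ^ 'n) set \<Rightarrow> ('n, real ^ 'n) bf_tree \<Rightarrow> bool" where
  "differentiable_factory P t = (\<forall>v\<in>vertices P. \<forall>u\<in>H0 P. norm u = 1 \<longrightarrow> (\<forall>x\<in>P.
     \<exists>D. ((\<lambda>s. Pv t v (x + s *\<^sub>R u)) has_real_derivative D)
            (at 0 within {s. x + s *\<^sub>R u \<in> unit_cube}) \<and>
         (\<lambda>T. deriv (\<lambda>s. PvT t v (x + s *\<^sub>R u) T) 0) \<longlonglongrightarrow> D))"

definition Pkn :: "nat \<Rightarrow> (real ^ 'n) set" where
  "Pkn k = {x \<in> unit_cube. (\<Sum>i\<in>UNIV. x $ i) = real k}"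

end

theory Submission
  imports Defs
begin


lemma trans_prob_nonneg:
  assumes bf: "bernoulli_factory V t" and x: "x \<in> unit_cube"
  shows "0 \<le> trans_prob x (t p) b"
proof -
  have "\<forall>i. 0 \<le> x $ i \<and> x $ i \<le> 1" using x by (simp add: unit_cube_def)
  moreover have "case t p of Const c \<Rightarrow> 0 < c \<and> c < 1 | Leaf v \<Rightarrow> v \<in> V | Coin _ \<Rightarrow> True"
    using bf by (simp add: bernoulli_factory_def)
  ultimately show ?thesis
    by (cases "t p") (auto simp: trans_prob_def)
qed

lemma path_weight_nonneg:
  assumes bf: "bernoulli_factory V t" and x: "x \<in> unit_cube"
  shows "0 \<le> path_weight t x p"
  unfolding path_weight_def by (intro prod_nonneg ballI trans_prob_nonneg[OF bf x])

lemma finite_len_le: "finite {p::bool list. length p \<le> T \<and> Q p}"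
  by (rule finite_subset[OF _ finite_lists_length_le[of "UNIV::bool set" T]]) auto

lemma PvT_nonneg:
  assumes bf: "bernoulli_factory V t" and x: "x \<in> unit_cube"
  shows "0 \<le> PvT t v x T"
  unfolding PvT_def by (intro sum_nonneg path_weight_nonneg[OF bf x])

lemma PvT_mono:
  assumes bf: "bernoulli_factory V t" and x: "x \<in> unit_cube"
  shows "incseq (\<lambda>T. PvT t v x T)"
  unfolding incseq_def PvT_def
  by (auto intro!: sum_mono2 finite_len_le path_weight_nonneg[OF bf x])

lemma PvT_le_term:
  assumes bf: "bernoulli_factory V t" and x: "x \<in> unit_cube"
  shows "PvT t v x T \<le> term_prob t x T"
  unfolding PvT_def term_prob_def
  by (auto intro!: sum_mono2 finite_len_le path_weight_nonneg[OF bf x] simp: is_leaf_def)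

lemma Pv_props:
  assumes bf: "bernoulli_factory V t" and x: "x \<in> unit_cube"
    and tp: "(\<lambda>T. term_prob t x T) \<longlonglongrightarrow> 1"
  shows "(\<lambda>T. PvT t v x T) \<longlonglongrightarrow> Pv t v x" "PvT t v x T \<le> Pv t v x" "0 \<le> Pv t v x"
proof -
  have "Bseq (\<lambda>T. term_prob t x T)" using tp by (rule convergent_imp_Bseq[OF convergentI])
  then obtain K where K: "\<And>T. norm (term_prob t x T) \<le> K" by (auto simp: Bseq_def)
  have "Bseq (\<lambda>T. PvT t v x T)"
    unfolding Bseq_def
  proof (intro exI[of _ "max K 1"] conjI allI)
    fix T show "norm (PvT t v x T) \<le> max K 1"
      using PvT_nonneg[OF bf x, of v T] PvT_le_term[OF bf x, of v T] K[of T] by auto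
  qed simp
  hence "convergent (\<lambda>T. PvT t v x T)"
    using Bseq_monoseq_convergent PvT_mono[OF bf x] incseq_imp_monoseq by blast
  thus c: "(\<lambda>T. PvT t v x T) \<longlonglongrightarrow> Pv t v x"
    unfolding Pv_def by (simp add: convergent_LIMSEQ_iff)
  show "PvT t v x T \<le> Pv t v x" by (rule incseq_le[OF PvT_mono[OF bf x] c])
  thus "0 \<le> Pv t v x" using PvT_nonneg[OF bf x, of v T] by linarith
qed



definition ind :: "'n set \<Rightarrow> real ^ 'n" where
  "ind W = (\<chi> l. if l \<in> W then 1 else 0)"

lemma sum_ind: "(\<Sum>i\<in>UNIV. ind W $ i) = real (card (W::'n::finite set))"
  by (simp add: ind_def sum.If_cases)

lemma ind_Pkn: "card (W::'n::finite set) = k \<Longrightarrow> ind W \<in> Pkn k"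
  by (auto simp: Pkn_def unit_cube_def sum_ind) (auto simp: ind_def)

lemma ind_vertex:
  assumes "card (W::'n::finite set) = k"
  shows "ind W \<in> vertices (Pkn k)"
  unfolding vertices_def extreme_point_of_def
proof (intro CollectI conjI ballI ind_Pkn[OF assms])
  fix a b :: "real ^ 'n" assume a: "a \<in> Pkn k" and b: "b \<in> Pkn k"
  show "ind W \<notin> open_segment a b"
  proof
    assume "ind W \<in> open_segment a b"
    then obtain u where u: "0 < u" "u < 1" "ind W = (1 - u) *\<^sub>R a + u *\<^sub>R b" and ab: "a \<noteq> b"
      unfolding in_segment by blast
    have "a $ l = b $ l" for l
    proof -
      have al: "0 \<le> a $ l" "a $ l \<le> 1" using a by (auto simp: Pkn_def unit_cube_def)
      have bl: "0 \<le> b $ l" "b $ l \<le> 1" using b by (auto simp: Pkn_def unit_cube_def)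
      have e: "ind W $ l = (1 - u) * a $ l + u * b $ l" using u(3) by (simp add: vec_eq_iff)
      show ?thesis
      proof (cases "l \<in> W")
        case True
        hence "(1 - u) * a $ l + u * b $ l = 1" using e by (simp add: ind_def)
        hence "(1 - u) * (1 - a $ l) + u * (1 - b $ l) = 0" by (simp add: algebra_simps)
        moreover have "0 \<le> (1 - u) * (1 - a $ l)" "0 \<le> u * (1 - b $ l)" using u al bl by auto
        ultimately have "(1 - u) * (1 - a $ l) = 0" "u * (1 - b $ l) = 0" by linarith+
        thus ?thesis using u by auto
      next
        case False
        hence "(1 - u) * a $ l + u * b $ l = 0" using e by (simp add: ind_def)
        moreover have "0 \<le> (1 - u) * a $ l" "0 \<le> u * b $ l" using u al bl by auto
        ultimately have "(1 - u) * a $ l = 0" "u * b $ l = 0" by linarith+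
        thus ?thesis using u by auto
      qed
    qed
    hence "a = b" by (simp add: vec_eq_iff)
    thus False using ab by simp
  qed
qed

lemma vertex_props:
  assumes v: "v \<in> vertices (Pkn k :: (real ^ 'n::finite) set)"
  shows "v \<in> Pkn k" "v $ l = 0 \<or> v $ l = 1"
proof -
  show vP: "v \<in> Pkn k" using v by (auto simp: vertices_def extreme_point_of_def)
  have cube: "0 \<le> v $ i \<and> v $ i \<le> 1" for i using vP by (auto simp: Pkn_def unit_cube_def)
  have sumv: "(\<Sum>i\<in>UNIV. v $ i) = real k" using vP by (auto simp: Pkn_def)
  show "v $ l = 0 \<or> v $ l = 1"
  proof (rule ccontr)
    assume "\<not> (v $ l = 0 \<or> v $ l = 1)"
    hence fl: "0 < v $ l" "v $ l < 1" using cube[of l] by auto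
    have "\<exists>m. m \<noteq> l \<and> 0 < v $ m \<and> v $ m < 1"
    proof (rule ccontr)
      assume "\<not> ?thesis"
      hence nf: "\<not> (0 < v $ m \<and> v $ m < 1)" if "m \<noteq> l" for m
        using that by blast
      have int: "v $ m = (if v $ m = 1 then 1 else 0)" if "m \<noteq> l" for m
        using nf[OF that] cube[of m] by (cases "v $ m = 1") auto
      have "(\<Sum>i\<in>UNIV. v $ i) = v $ l + (\<Sum>i\<in>UNIV - {l}. v $ i)"
        by (simp add: sum.remove)
      also have "(\<Sum>i\<in>UNIV - {l}. v $ i) = (\<Sum>i\<in>UNIV - {l}. (if v $ i = 1 then 1 else 0))"
        by (rule sum.cong[OF refl]) (rule int, simp)
      also have "\<dots> = real (card ((UNIV - {l}) \<inter> {i. v $ i = 1}))"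
        by (simp add: sum.If_cases)
      finally have "v $ l = real k - real (card ((UNIV - {l}) \<inter> {i. v $ i = 1}))"
        using sumv by linarith
      moreover obtain m where "m = card ((UNIV - {l}) \<inter> {i. v $ i = 1})" by blast
      ultimately have "v $ l = real k - real m" by simp
      with fl show False
        by (cases "m < k") (auto simp: of_nat_diff[symmetric] dest!: of_nat_less_imp_less)
    qed
    then obtain m where m: "m \<noteq> l" "0 < v $ m" "v $ m < 1" by blast
    define e where "e = min (min (v $ l) (1 - v $ l)) (min (v $ m) (1 - v $ m))"
    have e0: "0 < e" using fl m by (simp add: e_def)
    define d :: "real ^ 'n" where "d = (\<chi> i. (if i = l then e else 0) - (if i = m then e else 0))"
    have sd: "(\<Sum>i\<in>UNIV. d $ i) = 0"
      by (simp add: d_def sum_subtractf)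
    have inP: "v + c *\<^sub>R d \<in> Pkn k" if "c = 1 \<or> c = -1" for c
    proof -
      have "(\<Sum>i\<in>UNIV. (v + c *\<^sub>R d) $ i) = real k"
        using sumv sd by (simp add: sum.distrib sum_distrib_left[symmetric])
      moreover have "0 \<le> (v + c *\<^sub>R d) $ i \<and> (v + c *\<^sub>R d) $ i \<le> 1" for i
      proof -
        have le: "e \<le> v $ l" "e \<le> 1 - v $ l" "e \<le> v $ m" "e \<le> 1 - v $ m"
          unfolding e_def by linarith+
        have comp: "(v + c *\<^sub>R d) $ i = v $ i + c * ((if i = l then e else 0) - (if i = m then e else 0))"
          by (simp add: d_def)
        show ?thesis
          using that cube[of i] m(1) le e0 unfolding comp
          by (cases "i = l"; cases "i = m") auto
      qed
      ultimately show ?thesis by (auto simp: Pkn_def unit_cube_def)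
    qed
    have dl: "d $ l = e" using m(1) by (simp add: d_def)
    have mid: "v = midpoint (v + 1 *\<^sub>R d) (v + (-1) *\<^sub>R d)"
      by (simp add: midpoint_def vec_eq_iff)
    have ne: "v + 1 *\<^sub>R d \<noteq> v + (-1) *\<^sub>R d"
    proof
      assume "v + 1 *\<^sub>R d = v + (-1) *\<^sub>R d"
      hence "(v + 1 *\<^sub>R d) $ l = (v + (-1) *\<^sub>R d) $ l" by (rule arg_cong)
      hence "v $ l + d $ l = v $ l - d $ l" by simp
      thus False using dl e0 by simp
    qed
    have "v \<in> open_segment (v + 1 *\<^sub>R d) (v + (-1) *\<^sub>R d)"
      apply (subst mid) using ne by (rule midpoint_in_open_segment[THEN iffD2])
    moreover have "\<forall>a\<in>Pkn k. \<forall>b\<in>Pkn k. v \<notin> open_segment a b"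
      using v unfolding vertices_def extreme_point_of_def by blast
    ultimately show False using inP[of 1] inP[of "-1"] by blast
  qed
qed


lemma sum_comp: "(\<Sum>v\<in>V. p v *\<^sub>R v) $ l = (\<Sum>v\<in>V. p v * (v :: real ^ 'n) $ l)"
  by (simp add: sum_component)

locale supp =
  fixes k :: nat and p :: "real ^ 'n::finite \<Rightarrow> real" and x :: "real ^ 'n"
  assumes fin: "finite (vertices (Pkn k :: (real ^ 'n) set))"
    and pnn: "\<And>v. v \<in> vertices (Pkn k) \<Longrightarrow> 0 \<le> p v"
    and rep: "(\<Sum>v\<in>vertices (Pkn k). p v *\<^sub>R v) = x"
    and xP: "x \<in> Pkn k"
    and kpos: "0 < k"
begin

abbreviation "V \<equiv> vertices (Pkn k :: (real ^ 'n) set)"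

lemma xl: "x $ l = (\<Sum>v\<in>V. p v * v $ l)"
  unfolding rep[symmetric] by (rule sum_comp)

lemma psum: "(\<Sum>v\<in>V. p v) = 1"
proof -
  have "real k = (\<Sum>l\<in>UNIV. x $ l)" using xP by (simp add: Pkn_def)
  also have "\<dots> = (\<Sum>l\<in>UNIV. \<Sum>v\<in>V. p v * v $ l)" by (simp add: xl)
  also have "\<dots> = (\<Sum>v\<in>V. p v * (\<Sum>l\<in>UNIV. v $ l))"
    by (subst sum.swap) (simp add: sum_distrib_left)
  also have "\<dots> = (\<Sum>v\<in>V. p v * real k)"
  proof (rule sum.cong[OF refl])
    fix v assume "v \<in> V" hence "v \<in> Pkn k" by (rule vertex_props(1))
    thus "p v * (\<Sum>l\<in>UNIV. v $ l) = p v * real k" by (simp add: Pkn_def)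
  qed
  also have "\<dots> = (\<Sum>v\<in>V. p v) * real k" by (simp add: sum_distrib_right)
  finally show ?thesis using kpos by simp
qed

lemma zero0:
  assumes "x $ l = 0" "v \<in> V" "v $ l = 1" shows "p v = 0"
proof -
  have "(\<Sum>v\<in>V. p v * v $ l) = 0" using assms(1) xl[of l] by linarith
  moreover have "\<forall>v\<in>V. 0 \<le> p v * v $ l"
  proof
    fix v assume "v \<in> V" thus "0 \<le> p v * v $ l"
      using pnn vertex_props(2)[of v k l] by auto
  qed
  ultimately have "\<forall>v\<in>V. p v * v $ l = 0" using sum_nonneg_eq_0_iff[OF fin, of "\<lambda>v. p v * v $ l"] by simp
  hence "p v * v $ l = 0" using assms(2) by blast
  thus ?thesis using assms(3) by simp
qed

lemma zero1:
  assumes "x $ l = 1" "v \<in> V" "v $ l = 0" shows "p v = 0"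
proof -
  have "(\<Sum>v\<in>V. p v * (1 - v $ l)) = (\<Sum>v\<in>V. p v) - (\<Sum>v\<in>V. p v * v $ l)"
    by (simp add: algebra_simps sum_subtractf)
  also have "\<dots> = 0" using psum assms(1) xl[of l] by linarith
  finally have s: "(\<Sum>v\<in>V. p v * (1 - v $ l)) = 0" .
  have "\<forall>v\<in>V. 0 \<le> p v * (1 - v $ l)"
  proof
    fix v assume "v \<in> V" thus "0 \<le> p v * (1 - v $ l)"
      using pnn vertex_props(2)[of v k l] by auto
  qed
  hence "\<forall>v\<in>V. p v * (1 - v $ l) = 0" using s sum_nonneg_eq_0_iff[OF fin, of "\<lambda>v. p v * (1 - v $ l)"] by simp
  hence "p v * (1 - v $ l) = 0" using assms(2) by blast
  thus ?thesis using assms(3) by simp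
qed


lemma at_vertex:
  assumes "x = ind W" "v \<in> V" "v \<noteq> ind W" shows "p v = 0"
proof -
  obtain l where l: "v $ l \<noteq> ind W $ l" using assms(3) by (auto simp: vec_eq_iff)
  show ?thesis
  proof (cases "l \<in> W")
    case True
    hence "v $ l = 0" using l vertex_props(2)[OF assms(2), of l] by (auto simp: ind_def)
    thus ?thesis using zero1[of l v] True assms(1,2) by (simp add: ind_def)
  next
    case False
    hence "v $ l = 1" using l vertex_props(2)[OF assms(2), of l] by (auto simp: ind_def)
    thus ?thesis using zero0[of l v] False assms(1,2) by (simp add: ind_def)
  qed
qed

lemma edge:
  assumes W: "card W = k" and i: "i \<in> W" and j: "j \<notin> W"
    and x1: "\<And>l. l \<in> W \<Longrightarrow> l \<noteq> i \<Longrightarrow> x $ l = 1"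
    and x0: "\<And>l. l \<notin> W \<Longrightarrow> l \<noteq> j \<Longrightarrow> x $ l = 0"
  shows "\<And>v. v \<in> V \<Longrightarrow> v \<noteq> ind W \<Longrightarrow> v \<noteq> ind (insert j (W - {i})) \<Longrightarrow> p v = 0"
    and "p (ind (insert j (W - {i}))) = x $ j"
proof -
  have ij: "i \<noteq> j" using i j by auto
  have finW: "finite W" using W kpos card_gt_0_iff by blast
  have cases01: "v = ind W \<or> v = ind (insert j (W - {i})) \<or> p v = 0" if v: "v \<in> V" for v
  proof (rule ccontr)
    assume nc: "\<not> ?thesis"
    hence pv: "p v \<noteq> 0" by blast
    have v1: "v $ l = 1" if "l \<in> W" "l \<noteq> i" for l
      using zero1[of l v] x1[OF that] v pv vertex_props(2)[OF v, of l] by auto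
    have v0: "v $ l = 0" if "l \<notin> W" "l \<noteq> j" for l
      using zero0[of l v] x0[OF that] v pv vertex_props(2)[OF v, of l] by auto
    have comp: "v $ l = (if l \<in> W - {i} then 1 else 0) + (if l = i then v $ i else 0)
                   + (if l = j then v $ j else 0)" for l
      using v1 v0 i j by (cases "l \<in> W"; cases "l = i"; cases "l = j") auto
    have Wi: "{l \<in> W. l \<noteq> i} = W - {i}" by blast
    have "real k = (\<Sum>l\<in>UNIV. v $ l)" using vertex_props(1)[OF v] by (simp add: Pkn_def)
    also have "\<dots> = (\<Sum>l\<in>UNIV. (if l \<in> W - {i} then 1 else 0) + (if l = i then v $ i else 0)
                   + (if l = j then v $ j else 0))"
      by (rule sum.cong[OF refl]) (rule comp)
    also have "\<dots> = real (card (W - {i})) + v $ i + v $ j"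
      using Wi by (simp add: sum.distrib sum.If_cases)
    also have "card (W - {i}) = k - 1" using W i finW by simp
    finally have "v $ i + v $ j = 1" using kpos by (simp add: of_nat_diff)
    moreover have "v $ i = 0 \<or> v $ i = 1" "v $ j = 0 \<or> v $ j = 1"
      using vertex_props(2)[OF v] by auto
    ultimately have "(v $ i = 1 \<and> v $ j = 0) \<or> (v $ i = 0 \<and> v $ j = 1)" by auto
    thus False
    proof
      assume a: "v $ i = 1 \<and> v $ j = 0"
      have "v = ind W"
      proof (rule vec_eq_iff[THEN iffD2], rule allI)
        fix l show "v $ l = ind W $ l"
          using a v1[of l] v0[of l] i j by (cases "l \<in> W"; cases "l = i"; cases "l = j") (auto simp: ind_def)
      qed
      thus False using nc by blast
    next
      assume a: "v $ i = 0 \<and> v $ j = 1"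
      have "v = ind (insert j (W - {i}))"
      proof (rule vec_eq_iff[THEN iffD2], rule allI)
        fix l show "v $ l = ind (insert j (W - {i})) $ l"
          using a v1[of l] v0[of l] i j by (cases "l \<in> W"; cases "l = i"; cases "l = j") (auto simp: ind_def)
      qed
      thus False using nc by blast
    qed
  qed
  thus "\<And>v. v \<in> V \<Longrightarrow> v \<noteq> ind W \<Longrightarrow> v \<noteq> ind (insert j (W - {i})) \<Longrightarrow> p v = 0"
    by blast
  define W' where "W' = insert j (W - {i})"
  have cW': "card W' = k" using W i j finW kpos by (simp add: W'_def card_insert_if)
  have W'V: "ind W' \<in> V" by (rule ind_vertex[OF cW'])
  have "x $ j = (\<Sum>v\<in>V. p v * v $ j)" by (rule xl)
  also have "\<dots> = p (ind W') * ind W' $ j + (\<Sum>v\<in>V - {ind W'}. p v * v $ j)"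
    by (rule sum.remove[OF fin W'V])
  also have "(\<Sum>v\<in>V - {ind W'}. p v * v $ j) = 0"
  proof (rule sum.neutral, rule ballI)
    fix v assume v: "v \<in> V - {ind W'}"
    show "p v * v $ j = 0"
    proof (cases "v = ind W")
      case True thus ?thesis using j by (simp add: ind_def)
    next
      case False thus ?thesis using cases01[of v] v by (auto simp: W'_def)
    qed
  qed
  also have "ind W' $ j = 1" by (simp add: ind_def W'_def)
  finally show "p (ind (insert j (W - {i}))) = x $ j" by (simp add: W'_def)
qed

end



lemma deriv_nonneg_right:
  fixes h :: "real \<Rightarrow> real"
  assumes d: "(h has_real_derivative D) (at 0)" and h0: "h 0 = 0" and del: "0 < \<delta>"
    and nn: "\<And>y. 0 < y \<Longrightarrow> y \<le> \<delta> \<Longrightarrow> 0 \<le> h y"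
  shows "0 \<le> D"
proof -
  have "(h has_real_derivative D) (at 0 within {0..\<delta>})" using d DERIV_subset by blast
  hence "((\<lambda>y. (h y - h 0) / (y - 0)) \<longlongrightarrow> D) (at_right 0)"
    unfolding has_field_derivative_iff at_within_Icc_at_right[OF del] .
  moreover have "eventually (\<lambda>y. 0 \<le> (h y - h 0) / (y - 0)) (at_right 0)"
    using eventually_at_right_real[OF del] by eventually_elim (use nn h0 in auto)
  ultimately show ?thesis by (rule tendsto_lowerbound) simp
qed

lemma edge_deriv:
  fixes f :: "real \<Rightarrow> real"
  assumes d: "(f has_real_derivative D) (at 0 within S)" and del: "0 < \<delta>" and sub: "{0..\<delta>} \<subseteq> S"
    and fv: "\<And>y. 0 \<le> y \<Longrightarrow> y \<le> \<delta> \<Longrightarrow> f y = c * y"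
  shows "D = c"
proof -
  have "(f has_real_derivative D) (at 0 within {0..\<delta>})" using d sub DERIV_subset by blast
  hence "((\<lambda>y. (f y - f 0) / (y - 0)) \<longlongrightarrow> D) (at_right 0)"
    unfolding has_field_derivative_iff at_within_Icc_at_right[OF del] .
  moreover have "eventually (\<lambda>y. (f y - f 0) / (y - 0) = c) (at_right 0)"
    using eventually_at_right_real[OF del] by eventually_elim (use fv del in auto)
  ultimately have "((\<lambda>y. c) \<longlongrightarrow> D) (at_right (0::real))"
    by (subst tendsto_cong[of "\<lambda>y. c" "\<lambda>y. (f y - f 0) / (y - 0)"]) (auto elim: eventually_mono)
  thus ?thesis using tendsto_const tendsto_unique trivial_limit_at_right_real by blast
qed

lemma dir_deriv:
  fixes g :: "real ^ 'n::finite \<Rightarrow> real"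
  assumes "(g has_derivative L) (at w)"
  shows "((\<lambda>s. g (w + s *\<^sub>R u)) has_real_derivative L u) (at 0 within S)"
proof -
  have f: "((\<lambda>s::real. w + s *\<^sub>R u) has_derivative (\<lambda>s. s *\<^sub>R u)) (at 0 within S)"
    by (auto intro!: derivative_eq_intros)
  have g': "(g has_derivative L) (at ((\<lambda>s::real. w + s *\<^sub>R u) 0))" using assms by simp
  have "((\<lambda>s. g (w + s *\<^sub>R u)) has_derivative (\<lambda>s. L (s *\<^sub>R u))) (at 0 within S)"
    using has_derivative_compose[OF f g'] by simp
  moreover have "(\<lambda>s. L (s *\<^sub>R u)) = (*) (L u)"
    using has_derivative_bounded_linear[OF assms] by (auto simp: fun_eq_iff linear_simps)
  ultimately show ?thesis by (simp add: has_field_derivative_def)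
qed

lemma diff_prod:
  fixes f :: "'i \<Rightarrow> 'a::real_normed_vector \<Rightarrow> real"
  assumes "\<forall>i\<in>I. f i differentiable (at x)"
  shows "(\<lambda>x. \<Prod>i\<in>I. f i x) differentiable (at x)"
proof -
  from bchoice[OF assms[unfolded differentiable_def]]
  obtain f' where "\<forall>i\<in>I. (f i has_derivative f' i) (at x)" by auto
  thus ?thesis unfolding differentiable_def by (blast intro: has_derivative_prod)
qed

lemma trans_prob_diff: "(\<lambda>x. trans_prob x a b) differentiable (at (w::real ^ 'n::finite))"
proof -
  have c: "(\<lambda>x::real^'n. x $ i) differentiable (at w)" for i
    by (rule bounded_linear_imp_differentiable) (rule bounded_linear_vec_nth)
  show ?thesis
    by (cases a; cases b) (auto simp: trans_prob_def intro!: c differentiable_diff)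
qed

lemma PvT_diff: "(\<lambda>x. PvT t v x T) differentiable (at (w::real ^ 'n::finite))"
  unfolding PvT_def path_weight_def
  by (intro differentiable_sum ballI diff_prod trans_prob_diff)
    (rule finite_subset[OF _ finite_lists_length_le[of "UNIV::bool set" T]], auto)


lemma two_elems:
  assumes "finite A" "2 \<le> card A" obtains a b where "a \<in> A" "b \<in> A" "a \<noteq> b"
proof -
  have "\<not> card A \<le> Suc 0" using assms(2) by simp
  thus ?thesis using card_le_Suc0_iff_eq[OF assms(1)] that by blast
qed

locale fac =
  fixes k :: nat and t :: "('n::finite, real ^ 'n) bf_tree"
  assumes sf: "strong_factory (Pkn k) t" and df: "differentiable_factory (Pkn k) t"
    and finV: "finite (vertices (Pkn k :: (real ^ 'n) set))" and kpos: "0 < k"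
begin

lemma bf: "bernoulli_factory (vertices (Pkn k)) t" using sf by (simp add: strong_factory_def)
lemma tp: "x \<in> Pkn k \<Longrightarrow> (\<lambda>T. term_prob t x T) \<longlonglongrightarrow> 1" using sf by (simp add: strong_factory_def)
lemma repr: "x \<in> Pkn k \<Longrightarrow> (\<Sum>v\<in>vertices (Pkn k). Pv t v x *\<^sub>R v) = x"
  using sf by (simp add: strong_factory_def)
lemma cube: "x \<in> Pkn k \<Longrightarrow> x \<in> unit_cube" by (simp add: Pkn_def)

lemma supp_at: assumes x: "x \<in> Pkn k" shows "supp k (\<lambda>v. Pv t v x) x"
proof
  show "finite (vertices (Pkn k :: (real ^ 'n) set))" by (rule finV)
  show "\<And>v. v \<in> vertices (Pkn k) \<Longrightarrow> 0 \<le> Pv t v x"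
    by (rule Pv_props(3)[OF bf cube[OF x] tp[OF x]])
  show "(\<Sum>v\<in>vertices (Pkn k). Pv t v x *\<^sub>R v) = x" by (rule repr[OF x])
qed (use x kpos in auto)

lemma PvT_zero:
  assumes W: "card W = k" and v: "v \<in> vertices (Pkn k)" and ne: "v \<noteq> ind W"
  shows "PvT t v (ind W) T = 0"
proof -
  have x: "ind W \<in> Pkn k" by (rule ind_Pkn[OF W])
  interpret S: supp k "\<lambda>v. Pv t v (ind W)" "ind W" by (rule supp_at[OF x])
  have "Pv t v (ind W) = 0" by (rule S.at_vertex[OF refl v ne])
  moreover have "PvT t v (ind W) T \<le> Pv t v (ind W)" by (rule Pv_props(2)[OF bf cube[OF x] tp[OF x]])
  moreover have "0 \<le> PvT t v (ind W) T" by (rule PvT_nonneg[OF bf cube[OF x]])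
  ultimately show ?thesis by linarith
qed

definition Lf where "Lf W v T = (SOME L. ((\<lambda>x. PvT t v x T) has_derivative L) (at (ind W)))"

lemma Lf: "((\<lambda>x. PvT t v x T) has_derivative Lf W v T) (at (ind W))"
  using PvT_diff[of t v T "ind W", unfolded differentiable_def] unfolding Lf_def by (rule someI_ex)

lemma Lf_lin: "linear (Lf W v T)"
  using has_derivative_bounded_linear[OF Lf] bounded_linear.linear by blast

lemma sign_in:
  assumes W: "card W = k" and l: "l \<in> W" and v: "v \<in> vertices (Pkn k)" and ne: "v \<noteq> ind W"
  shows "Lf W v T (ind {l}) \<le> 0"
proof -
  have "0 \<le> Lf W v T (- ind {l})"
  proof (rule deriv_nonneg_right[where h = "\<lambda>s. PvT t v (ind W + s *\<^sub>R (- ind {l})) T" and \<delta> = 1])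
    show "((\<lambda>s. PvT t v (ind W + s *\<^sub>R - ind {l}) T) has_real_derivative Lf W v T (- ind {l})) (at 0)"
      by (rule dir_deriv[OF Lf])
    show "PvT t v (ind W + 0 *\<^sub>R - ind {l}) T = 0" using PvT_zero[OF W v ne] by simp
    show "0 < (1::real)" by simp
    fix y :: real assume y: "0 < y" "y \<le> 1"
    have "ind W + y *\<^sub>R - ind {l} \<in> unit_cube"
      unfolding unit_cube_def using y l by (auto simp: ind_def)
    thus "0 \<le> PvT t v (ind W + y *\<^sub>R - ind {l}) T" by (rule PvT_nonneg[OF bf])
  qed
  moreover have "Lf W v T (- ind {l}) = - Lf W v T (ind {l})" using Lf_lin linear_neg by blast
  ultimately show ?thesis by linarith
qed

lemma sign_out:
  assumes W: "card W = k" and l: "l \<notin> W" and v: "v \<in> vertices (Pkn k)" and ne: "v \<noteq> ind W"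
  shows "0 \<le> Lf W v T (ind {l})"
proof (rule deriv_nonneg_right[where h = "\<lambda>s. PvT t v (ind W + s *\<^sub>R ind {l}) T" and \<delta> = 1])
  show "((\<lambda>s. PvT t v (ind W + s *\<^sub>R ind {l}) T) has_real_derivative Lf W v T (ind {l})) (at 0)"
    by (rule dir_deriv[OF Lf])
  show "PvT t v (ind W + 0 *\<^sub>R ind {l}) T = 0" using PvT_zero[OF W v ne] by simp
  show "0 < (1::real)" by simp
  fix y :: real assume y: "0 < y" "y \<le> 1"
  have "ind W + y *\<^sub>R ind {l} \<in> unit_cube"
    unfolding unit_cube_def using y l by (auto simp: ind_def)
  thus "0 \<le> PvT t v (ind W + y *\<^sub>R ind {l}) T" by (rule PvT_nonneg[OF bf])
qed


lemma edge_lim: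
  assumes W: "card W = k" and i: "i \<in> W" and j: "j \<notin> W"
    and v: "v \<in> vertices (Pkn k)" and ne: "v \<noteq> ind W"
  shows "\<exists>a>0. (\<lambda>T. a * (Lf W v T (ind {j}) - Lf W v T (ind {i})))
            \<longlonglongrightarrow> (if v = ind (insert j (W - {i})) then a else 0)"
proof -
  define d :: "real ^ 'n" where "d = ind {j} - ind {i}"
  have ij: "i \<noteq> j" using i j by auto
  have dj: "d $ j = 1" using ij by (simp add: d_def ind_def)
  hence "d \<noteq> 0" by auto
  hence dnz: "norm d > 0" by simp
  define a where "a = 1 / norm d"
  have a0: "a > 0" using dnz by (simp add: a_def)
  define u where "u = a *\<^sub>R d"
  have nu: "norm u = 1" using dnz by (simp add: u_def a_def)
  define W' where "W' = insert j (W - {i})"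
  have finW: "finite W" using W kpos card_gt_0_iff by blast
  have cW': "card W' = k" using W i j finW kpos by (simp add: W'_def card_insert_if)
  have wP: "ind W \<in> Pkn k" by (rule ind_Pkn[OF W])
  have W'P: "ind W' \<in> Pkn k" by (rule ind_Pkn[OF cW'])
  have indW': "ind W' = ind W + d"
  proof (rule vec_eq_iff[THEN iffD2], rule allI)
    fix m show "ind W' $ m = (ind W + d) $ m"
      using i j ij by (cases "m \<in> W"; cases "m = i"; cases "m = j") (auto simp: ind_def d_def W'_def)
  qed
  have uH: "u \<in> H0 (Pkn k)"
  proof -
    have aff: "affine (affine hull (Pkn k :: (real ^ 'n) set))" by (rule affine_affine_hull)
    have h1: "ind W \<in> affine hull Pkn k" by (rule hull_inc[OF wP])
    have h2: "ind W' \<in> affine hull Pkn k" by (rule hull_inc[OF W'P])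
    have h3: "(1 - a) *\<^sub>R ind W + a *\<^sub>R ind W' \<in> affine hull Pkn k"
      by (rule mem_affine[OF aff h1 h2]) simp
    have eq: "(1 - a) *\<^sub>R ind W + a *\<^sub>R ind W' = ind W + u"
      unfolding indW' u_def by (simp add: scaleR_add_right scaleR_diff_left)
    have h4: "ind W + u \<in> affine hull Pkn k" using h3 unfolding eq .
    have "u = (ind W + u) - ind W" by simp
    thus ?thesis unfolding H0_def using h1 h4 by blast
  qed
  have "\<exists>D. ((\<lambda>s. Pv t v (ind W + s *\<^sub>R u)) has_real_derivative D)
            (at 0 within {s. ind W + s *\<^sub>R u \<in> unit_cube}) \<and>
         (\<lambda>T. deriv (\<lambda>s. PvT t v (ind W + s *\<^sub>R u) T) 0) \<longlonglongrightarrow> D"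
    using df[unfolded differentiable_factory_def, rule_format, OF v uH nu wP] .
  then obtain D where Dd: "((\<lambda>s. Pv t v (ind W + s *\<^sub>R u)) has_real_derivative D)
            (at 0 within {s. ind W + s *\<^sub>R u \<in> unit_cube})"
    and DT: "(\<lambda>T. deriv (\<lambda>s. PvT t v (ind W + s *\<^sub>R u) T) 0) \<longlonglongrightarrow> D" by blast
  define c where "c = (if v = ind W' then a else 0)"
  have comp: "(ind W + s *\<^sub>R u) $ m = ind W $ m + s * a * d $ m" for s m
    by (simp add: u_def)
  have ptP: "ind W + s *\<^sub>R u \<in> Pkn k" if s: "0 \<le> s" "s \<le> 1 / a" for s
  proof -
    have sa: "0 \<le> s * a" "s * a \<le> 1" using s a0 by (auto simp: field_simps)
    have sd: "(\<Sum>m\<in>UNIV. d $ m) = 0" by (simp add: d_def sum_subtractf sum_ind)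
    have "(\<Sum>m\<in>UNIV. (ind W + s *\<^sub>R u) $ m) = (\<Sum>m\<in>UNIV. ind W $ m) + s * a * (\<Sum>m\<in>UNIV. d $ m)"
      unfolding comp by (simp add: sum.distrib sum_distrib_left mult.assoc)
    also have "\<dots> = real k" using sd W by (simp add: sum_ind)
    finally have "(\<Sum>m\<in>UNIV. (ind W + s *\<^sub>R u) $ m) = real k" .
    moreover have "0 \<le> (ind W + s *\<^sub>R u) $ m \<and> (ind W + s *\<^sub>R u) $ m \<le> 1" for m
      unfolding comp using sa i j ij
      by (cases "m \<in> W"; cases "m = i"; cases "m = j") (auto simp: ind_def d_def)
    ultimately show ?thesis by (simp add: Pkn_def unit_cube_def)
  qed
  have fv: "Pv t v (ind W + s *\<^sub>R u) = c * s" if s: "0 \<le> s" "s \<le> 1 / a" for s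
  proof -
    interpret S: supp k "\<lambda>v. Pv t v (ind W + s *\<^sub>R u)" "ind W + s *\<^sub>R u" by (rule supp_at[OF ptP[OF s]])
    have x1: "(ind W + s *\<^sub>R u) $ l = 1" if "l \<in> W" "l \<noteq> i" for l
      unfolding comp using that j by (auto simp: ind_def d_def)
    have x0: "(ind W + s *\<^sub>R u) $ l = 0" if "l \<notin> W" "l \<noteq> j" for l
      unfolding comp using that i by (auto simp: ind_def d_def)
    define pt where "pt = ind W + s *\<^sub>R u"
    have E2: "Pv t (ind W') pt = pt $ j" unfolding W'_def pt_def
    proof (rule S.edge(2)[OF W i j])
      fix l assume "l \<in> W" "l \<noteq> i" thus "(ind W + s *\<^sub>R u) $ l = 1" by (rule x1)
    next
      fix l assume "l \<notin> W" "l \<noteq> j" thus "(ind W + s *\<^sub>R u) $ l = 0" by (rule x0)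
    qed
    have E1: "Pv t v pt = 0" if "v \<noteq> ind W'" unfolding pt_def
    proof (rule S.edge(1)[OF W i j])
      fix l assume "l \<in> W" "l \<noteq> i" thus "(ind W + s *\<^sub>R u) $ l = 1" by (rule x1)
    next
      fix l assume "l \<notin> W" "l \<noteq> j" thus "(ind W + s *\<^sub>R u) $ l = 0" by (rule x0)
    qed (use v ne that in \<open>auto simp: W'_def\<close>)
    show ?thesis
    proof (cases "v = ind W'")
      case True
      have "Pv t v (ind W + s *\<^sub>R u) = (ind W + s *\<^sub>R u) $ j"
        using E2 True by (simp add: pt_def)
      also have "\<dots> = c * s" unfolding comp using True j dj by (simp add: c_def ind_def)
      finally show ?thesis .
    next
      case False
      thus ?thesis using E1 by (simp add: c_def pt_def)
    qed
  qed
  have Dc: "D = c"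
  proof (rule edge_deriv[OF Dd, of "1 / a"])
    show "0 < 1 / a" using a0 by simp
    show "{0..1 / a} \<subseteq> {s. ind W + s *\<^sub>R u \<in> unit_cube}"
    proof
      fix s assume "s \<in> {0..1 / a}"
      hence "ind W + s *\<^sub>R u \<in> Pkn k" using ptP by auto
      thus "s \<in> {s. ind W + s *\<^sub>R u \<in> unit_cube}" using cube by blast
    qed
    show "\<And>y. 0 \<le> y \<Longrightarrow> y \<le> 1 / a \<Longrightarrow> Pv t v (ind W + y *\<^sub>R u) = c * y" by (rule fv)
  qed
  have dT: "deriv (\<lambda>s. PvT t v (ind W + s *\<^sub>R u) T) 0 = a * (Lf W v T (ind {j}) - Lf W v T (ind {i}))" for T
  proof -
    have "deriv (\<lambda>s. PvT t v (ind W + s *\<^sub>R u) T) 0 = Lf W v T u"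
      by (rule DERIV_imp_deriv[OF dir_deriv[OF Lf]])
    also have "\<dots> = a * (Lf W v T (ind {j}) - Lf W v T (ind {i}))"
      using Lf_lin[of W v T] unfolding u_def d_def by (simp add: linear_cmul linear_diff)
    finally show ?thesis .
  qed
  show ?thesis
    using DT a0 unfolding dT Dc c_def W'_def by blast
qed

lemma contra:
  fixes W :: "'n set"
  assumes W: "card W = k" and i: "i \<in> W" "i' \<in> W" "i \<noteq> i'" and j: "j \<notin> W" "j' \<notin> W" "j \<noteq> j'"
  shows False
proof -
  define vs where "vs = ind (insert j (W - {i}))"
  have finW: "finite W" using W kpos card_gt_0_iff by blast
  have cW': "card (insert j (W - {i})) = k" using W i j finW kpos by (simp add: card_insert_if)
  have v: "vs \<in> vertices (Pkn k)" unfolding vs_def by (rule ind_vertex[OF cW'])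
  have vj: "vs $ j = 1" by (simp add: vs_def ind_def)
  have vi: "vs $ i = 0" using i j by (auto simp: vs_def ind_def)
  have ne: "vs \<noteq> ind W" using vj j by (auto simp: ind_def)
  have ne2: "vs \<noteq> ind (insert j (W - {i'}))"
  proof
    assume "vs = ind (insert j (W - {i'}))"
    hence "vs $ i = 1" using i j by (auto simp: ind_def)
    thus False using vi by simp
  qed
  have ne3: "vs \<noteq> ind (insert j' (W - {i}))"
  proof
    assume "vs = ind (insert j' (W - {i}))"
    hence "vs $ j = 0" using j by (auto simp: ind_def)
    thus False using vj by simp
  qed
  define A where "A T = Lf W vs T (ind {j})" for T
  define B where "B T = - Lf W vs T (ind {i})" for T
  define B' where "B' T = - Lf W vs T (ind {i'})" for T
  define A' where "A' T = Lf W vs T (ind {j'})" for T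
  have A0: "0 \<le> A T" for T unfolding A_def by (rule sign_out[OF W j(1) v ne])
  have A'0: "0 \<le> A' T" for T unfolding A'_def by (rule sign_out[OF W j(2) v ne])
  have B0: "0 \<le> B T" for T unfolding B_def using sign_in[OF W i(1) v ne] by simp
  have B'0: "0 \<le> B' T" for T unfolding B'_def using sign_in[OF W i(2) v ne] by simp
  obtain a1 where a1: "a1 > 0" "(\<lambda>T. a1 * (A T + B T)) \<longlonglongrightarrow> a1"
    using edge_lim[OF W i(1) j(1) v ne] by (auto simp: A_def B_def vs_def)
  obtain a2 where a2: "a2 > 0" "(\<lambda>T. a2 * (A T + B' T)) \<longlonglongrightarrow> 0"
    using edge_lim[OF W i(2) j(1) v ne] ne2 by (auto simp: A_def B'_def)
  obtain a3 where a3: "a3 > 0" "(\<lambda>T. a3 * (A' T + B T)) \<longlonglongrightarrow> 0"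
    using edge_lim[OF W i(1) j(2) v ne] ne3 by (auto simp: A'_def B_def)
  have l2: "(\<lambda>T. A T + B' T) \<longlonglongrightarrow> 0"
  proof -
    have "(\<lambda>T. (1 / a2) * (a2 * (A T + B' T))) \<longlonglongrightarrow> (1 / a2) * 0"
      by (rule tendsto_mult[OF tendsto_const a2(2)])
    thus ?thesis using a2(1) by simp
  qed
  have l3: "(\<lambda>T. A' T + B T) \<longlonglongrightarrow> 0"
  proof -
    have "(\<lambda>T. (1 / a3) * (a3 * (A' T + B T))) \<longlonglongrightarrow> (1 / a3) * 0"
      by (rule tendsto_mult[OF tendsto_const a3(2)])
    thus ?thesis using a3(1) by simp
  qed
  have lA: "A \<longlonglongrightarrow> 0"
    by (rule tendsto_sandwich[OF _ _ tendsto_const l2]) (use A0 B'0 in auto)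
  have lB: "B \<longlonglongrightarrow> 0"
    by (rule tendsto_sandwich[OF _ _ tendsto_const l3]) (use B0 A'0 in auto)
  have "(\<lambda>T. a1 * (A T + B T)) \<longlonglongrightarrow> a1 * (0 + 0)"
    by (intro tendsto_intros lA lB)
  hence "a1 = a1 * (0 + 0)" using a1(2) LIMSEQ_unique by blast
  thus False using a1(1) by simp
qed

end


theorem lemma7p7:
  fixes k :: nat
  assumes "1 < k" and "k + 1 < CARD('n::finite)"
  shows "\<not> (\<exists>t :: ('n, real ^ 'n) bf_tree.
            strong_factory (Pkn k :: (real ^ 'n) set) t \<and> differentiable_factory (Pkn k) t)"
proof
  assume "\<exists>t :: ('n, real ^ 'n) bf_tree.
            strong_factory (Pkn k :: (real ^ 'n) set) t \<and> differentiable_factory (Pkn k) t"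
  then obtain t :: "('n, real ^ 'n) bf_tree" where sf: "strong_factory (Pkn k :: (real ^ 'n) set) t"
    and df: "differentiable_factory (Pkn k) t" by blast
  have kpos: "0 < k" using assms(1) by simp
  have "k \<le> card (UNIV :: 'n set)" using assms(2) by simp
  then obtain W :: "'n set" where W: "card W = k" "finite W"
    using obtain_subset_with_card_n by metis
  obtain i i' where i: "i \<in> W" "i' \<in> W" "i \<noteq> i'"
    using two_elems[OF W(2)] W(1) assms(1) by (metis Suc_1 Suc_leI)
  have cc: "card (UNIV - W) = CARD('n) - k" using W by (simp add: card_Diff_subset)
  obtain j j' where j: "j \<in> UNIV - W" "j' \<in> UNIV - W" "j \<noteq> j'"
    using two_elems[of "UNIV - W"] cc assms(2) by force
  have wP: "ind W \<in> Pkn k" by (rule ind_Pkn[OF W(1)])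
  have finV: "finite (vertices (Pkn k :: (real ^ 'n) set))"
  proof (rule ccontr)
    assume inf: "\<not> finite (vertices (Pkn k :: (real ^ 'n) set))"
    have "(\<Sum>v\<in>vertices (Pkn k). Pv t v (ind W) *\<^sub>R v) = ind W"
      using sf wP by (simp add: strong_factory_def)
    hence "ind W = (0 :: real ^ 'n)" using inf by simp
    hence "ind W $ i = 0" by simp
    thus False using i by (simp add: ind_def)
  qed
  interpret fac k t by (unfold_locales) (fact sf, fact df, fact finV, fact kpos)
  show False using contra[OF W(1) i(1) i(2) i(3)] j by blast
qed

end
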